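(* The quotient $\mathbb F$-vector space $\Re/I_\nu(a,b,c)$ is spanned by the cosets $A^i+I_\nu(a,b,c)$, $i\in\mathbb N$.
   Context: $\mathbb F$ is algebraically closed with $\operatorname{char}\mathbb F\ne2$. The Racah algebra $\Re$ is the unital associative $\mathbb F$-algebra with generators $A,B,C,D$ and relations $[A,B]=[B,C]=[C,A]=2D$ together with the requirement that each of $\alpha:=[A,D]+AC-BA$, $\beta:=[B,D]+BA-CB$, $\gamma:=[C,D]+CB-AC$ is central in $\Re$; $\delta:=A+B+C$. For $a,b,c,\nu\in\mathbb F$ and $i\in\mathbb Z$: $\theta_i=(a+\tfrac\nu2-i)(a+\tfrac\nu2-i+1)$, $\theta_i^*=(b+\tfrac\nu2-i)(b+\tfrac\nu2-i+1)$, $\varphi_i=i(i-\nu-1)(a+b+c+\tfrac\nu2-i+2)(a+b-c+\tfrac\nu2-i+1)$, $\zeta=(c-b)(c+b+1)(a-\tfrac\nu2)(a+\tfrac\nu2+1)$, $\zeta^*=(a-c)(a+c+1)(b-\tfrac\nu2)(b+\tfrac\nu2+1)$, $\eta=\tfrac\nu2(\tfrac\nu2+1)+a(a+1)+b(b+1)+c(c+1)$. $I_\nu(a,b,c)$ is the left ideal of $\Re$ generated by $B-\theta_0^*$, $(B-\theta_1^* )(A-\theta_0)-\varphi_1$, $\alpha-\zeta$, $\beta-\zeta^*$, $\delta-\eta$. *)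

theory Defs
  imports "HOL-Computational_Algebra.Polynomial"
begin

text \<open>The free unital associative algebra over a field on generators A,B,C,D,
  realised as finitely supported functions from words to scalars.\<close>

datatype gen = GA | GB | GC | GD

type_synonym 'a fa = "gen list \<Rightarrow> 'a"

definition fa_valid :: "'a::field fa \<Rightarrow> bool" where
  "fa_valid p \<longleftrightarrow> finite {w. p w \<noteq> 0}"

definition fa_zero :: "'a::field fa" where "fa_zero = (\<lambda>w. 0)"
definition fa_add :: "'a::field fa \<Rightarrow> 'a fa \<Rightarrow> 'a fa" where
  "fa_add p q = (\<lambda>w. p w + q w)"
definition fa_sub :: "'a::field fa \<Rightarrow> 'a fa \<Rightarrow> 'a fa" where
  "fa_sub p q = (\<lambda>w. p w - q w)"
definition fa_smult :: "'a::field \<Rightarrow> 'a fa \<Rightarrow> 'a fa" where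
  "fa_smult c p = (\<lambda>w. c * p w)"
definition fa_const :: "'a::field \<Rightarrow> 'a fa" where
  "fa_const c = (\<lambda>w. if w = [] then c else 0)"
definition fa_gen :: "gen \<Rightarrow> 'a::field fa" where
  "fa_gen g = (\<lambda>w. if w = [g] then 1 else 0)"
definition fa_mul :: "'a::field fa \<Rightarrow> 'a fa \<Rightarrow> 'a fa" where
  "fa_mul p q = (\<lambda>w. \<Sum>k\<le>length w. p (take k w) * q (drop k w))"

primrec fa_pow :: "'a::field fa \<Rightarrow> nat \<Rightarrow> 'a fa" where
  "fa_pow p 0 = fa_const 1"
| "fa_pow p (Suc n) = fa_mul p (fa_pow p n)"

definition fa_comm :: "'a::field fa \<Rightarrow> 'a fa \<Rightarrow> 'a fa" where
  "fa_comm p q = fa_sub (fa_mul p q) (fa_mul q p)"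

inductive_set two_ideal :: "'a::field fa set \<Rightarrow> 'a fa set" for S where
  ti_zero: "fa_zero \<in> two_ideal S"
| ti_gen: "s \<in> S \<Longrightarrow> s \<in> two_ideal S"
| ti_add: "x \<in> two_ideal S \<Longrightarrow> y \<in> two_ideal S \<Longrightarrow> fa_add x y \<in> two_ideal S"
| ti_lmul: "x \<in> two_ideal S \<Longrightarrow> fa_valid u \<Longrightarrow> fa_mul u x \<in> two_ideal S"
| ti_rmul: "x \<in> two_ideal S \<Longrightarrow> fa_valid u \<Longrightarrow> fa_mul x u \<in> two_ideal S"

inductive_set left_ideal :: "'a::field fa set \<Rightarrow> 'a fa set" for S where
  li_zero: "fa_zero \<in> left_ideal S"
| li_gen: "s \<in> S \<Longrightarrow> s \<in> left_ideal S"
| li_add: "x \<in> left_ideal S \<Longrightarrow> y \<in> left_ideal S \<Longrightarrow> fa_add x y \<in> left_ideal S"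
| li_lmul: "x \<in> left_ideal S \<Longrightarrow> fa_valid u \<Longrightarrow> fa_mul u x \<in> left_ideal S"

abbreviation "fA \<equiv> fa_gen GA"
abbreviation "fB \<equiv> fa_gen GB"
abbreviation "fC \<equiv> fa_gen GC"
abbreviation "fD \<equiv> fa_gen GD"

definition r_alpha :: "'a::field fa" where
  "r_alpha = fa_add (fa_comm fA fD) (fa_sub (fa_mul fA fC) (fa_mul fB fA))"
definition r_beta :: "'a::field fa" where
  "r_beta = fa_add (fa_comm fB fD) (fa_sub (fa_mul fB fA) (fa_mul fC fB))"
definition r_gamma :: "'a::field fa" where
  "r_gamma = fa_add (fa_comm fC fD) (fa_sub (fa_mul fC fB) (fa_mul fA fC))"
definition r_delta :: "'a::field fa" where
  "r_delta = fa_add fA (fa_add fB fC)"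

definition racah_rels :: "'a::field fa set" where
  "racah_rels =
     {fa_sub (fa_comm fA fB) (fa_smult 2 fD),
      fa_sub (fa_comm fB fC) (fa_smult 2 fD),
      fa_sub (fa_comm fC fA) (fa_smult 2 fD)}
   \<union> {fa_comm r (fa_gen g) | r g. r \<in> {r_alpha, r_beta, r_gamma}}"

text \<open>Kernel of the quotient map Free -> Re.\<close>
definition racah_ideal :: "'a::field fa set" where
  "racah_ideal = two_ideal racah_rels"

definition theta :: "'a::field \<Rightarrow> 'a \<Rightarrow> int \<Rightarrow> 'a" where
  "theta a \<nu> i = (a + \<nu>/2 - of_int i) * (a + \<nu>/2 - of_int i + 1)"
definition thetas :: "'a::field \<Rightarrow> 'a \<Rightarrow> int \<Rightarrow> 'a" where
  "thetas b \<nu> i = (b + \<nu>/2 - of_int i) * (b + \<nu>/2 - of_int i + 1)"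
definition phi :: "'a::field \<Rightarrow> 'a \<Rightarrow> 'a \<Rightarrow> 'a \<Rightarrow> int \<Rightarrow> 'a" where
  "phi a b c \<nu> i = of_int i * (of_int i - \<nu> - 1) * (a + b + c + \<nu>/2 - of_int i + 2)
                   * (a + b - c + \<nu>/2 - of_int i + 1)"
definition zeta :: "'a::field \<Rightarrow> 'a \<Rightarrow> 'a \<Rightarrow> 'a \<Rightarrow> 'a" where
  "zeta a b c \<nu> = (c - b) * (c + b + 1) * (a - \<nu>/2) * (a + \<nu>/2 + 1)"
definition zetas :: "'a::field \<Rightarrow> 'a \<Rightarrow> 'a \<Rightarrow> 'a \<Rightarrow> 'a" where
  "zetas a b c \<nu> = (a - c) * (a + c + 1) * (b - \<nu>/2) * (b + \<nu>/2 + 1)"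
definition eta :: "'a::field \<Rightarrow> 'a \<Rightarrow> 'a \<Rightarrow> 'a \<Rightarrow> 'a" where
  "eta a b c \<nu> = \<nu>/2 * (\<nu>/2 + 1) + a * (a + 1) + b * (b + 1) + c * (c + 1)"

text \<open>Lifts to the free algebra of the generators of the left ideal I_nu(a,b,c).\<close>
definition I_gens :: "'a::field \<Rightarrow> 'a \<Rightarrow> 'a \<Rightarrow> 'a \<Rightarrow> 'a fa set" where
  "I_gens a b c \<nu> =
     {fa_sub fB (fa_const (thetas b \<nu> 0)),
      fa_sub (fa_mul (fa_sub fB (fa_const (thetas b \<nu> 1))) (fa_sub fA (fa_const (theta a \<nu> 0))))
             (fa_const (phi a b c \<nu> 1)),
      fa_sub r_alpha (fa_const (zeta a b c \<nu>)),
      fa_sub r_beta (fa_const (zetas a b c \<nu>)),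
      fa_sub r_delta (fa_const (eta a b c \<nu>))}"

text \<open>Preimage in the free algebra of I_nu(a,b,c) under Free -> Re:
  the sum of the Racah ideal and the left ideal generated by the lifts.\<close>
definition I_pre :: "'a::field \<Rightarrow> 'a \<Rightarrow> 'a \<Rightarrow> 'a \<Rightarrow> 'a fa set" where
  "I_pre a b c \<nu> = {fa_add j l | j l. j \<in> racah_ideal \<and> l \<in> left_ideal (I_gens a b c \<nu>)}"

end

theory Submission
  imports Defs
begin


lemma fa_mul_assoc_raw: "fa_mul (fa_mul p q) r = fa_mul p (fa_mul q r)"
proof (rule ext)
  fix w :: "gen list"
  define n where "n = length w"
  define g where "g = (\<lambda>j i. p (take j w) * q (take i (drop j w)) * r (drop (j+i) w))"
  have "fa_mul (fa_mul p q) r w = (\<Sum>k\<le>n. \<Sum>j\<le>k. g j (k - j))"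
    unfolding fa_mul_def n_def g_def
    by (auto simp: sum_distrib_right min_def drop_take intro!: sum.cong)
  also have "\<dots> = (\<Sum>(j,i)\<in>{(j,i). j+i \<le> n}. g j i)"
    by (rule sum.triangle_reindex_eq[symmetric])
  also have "{(j,i). j+i \<le> n} = (SIGMA j:{..n}. {..n-j})" by auto
  also have "(\<Sum>(j,i)\<in>(SIGMA j:{..n}. {..n-j}). g j i) = (\<Sum>j\<le>n. \<Sum>i\<le>n-j. g j i)"
    by (rule sum.Sigma[symmetric]) auto
  also have "\<dots> = fa_mul p (fa_mul q r) w"
    unfolding fa_mul_def n_def g_def
    by (auto simp: sum_distrib_left mult.assoc add.commute intro!: sum.cong)
  finally show "fa_mul (fa_mul p q) r w = fa_mul p (fa_mul q r) w" .
qed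



lemma fa_mul_const_left: "fa_mul (fa_const s) p = (\<lambda>w. s * p w)"
proof (rule ext)
  fix w :: "gen list"
  show "fa_mul (fa_const s) p w = s * p w"
  proof (cases w)
    case Nil then show ?thesis by (simp add: fa_mul_def fa_const_def)
  next
    case (Cons g v)
    then show ?thesis
      by (simp add: fa_mul_def fa_const_def sum.atMost_Suc_shift del: sum.atMost_Suc)
  qed
qed

lemma fa_mul_const_right: "fa_mul p (fa_const s) = (\<lambda>w. p w * s)"
proof (rule ext)
  fix w :: "gen list"
  have "fa_mul p (fa_const s) w = (\<Sum>k\<le>length w. if k = length w then p w * s else 0)"
    unfolding fa_mul_def fa_const_def by (rule sum.cong) auto
  also have "\<dots> = p w * s" by simp
  finally show "fa_mul p (fa_const s) w = p w * s" .
qed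

lemma fa_mul_add_right: "fa_mul p (\<lambda>w. q w + r w) = (\<lambda>w. fa_mul p q w + fa_mul p r w)"
  by (auto simp: fa_mul_def distrib_left sum.distrib)
lemma fa_mul_add_left: "fa_mul (\<lambda>w. q w + r w) p = (\<lambda>w. fa_mul q p w + fa_mul r p w)"
  by (auto simp: fa_mul_def distrib_right sum.distrib)
lemma fa_mul_zero_left: "fa_mul (\<lambda>w. 0) p = (\<lambda>w. 0)"
  by (auto simp: fa_mul_def)
lemma fa_mul_neg_left: "fa_mul (\<lambda>w. - q w) p = (\<lambda>w. - fa_mul q p w)"
  by (auto simp: fa_mul_def sum_negf)
lemma fa_mul_neg_right: "fa_mul p (\<lambda>w. - q w) = (\<lambda>w. - fa_mul p q w)"
  by (auto simp: fa_mul_def sum_negf)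

typedef (overloaded) 'a fw = "UNIV :: (gen list \<Rightarrow> 'a::field) set" by simp

setup_lifting type_definition_fw

instantiation fw :: (field) ring_1
begin
lift_definition zero_fw :: "'a fw" is "\<lambda>w. 0" .
lift_definition one_fw :: "'a fw" is "fa_const 1" .
lift_definition plus_fw :: "'a fw \<Rightarrow> 'a fw \<Rightarrow> 'a fw" is "\<lambda>p q w. p w + q w" .
lift_definition minus_fw :: "'a fw \<Rightarrow> 'a fw \<Rightarrow> 'a fw" is "\<lambda>p q w. p w - q w" .
lift_definition uminus_fw :: "'a fw \<Rightarrow> 'a fw" is "\<lambda>p w. - p w" .
lift_definition times_fw :: "'a fw \<Rightarrow> 'a fw \<Rightarrow> 'a fw" is "fa_mul" .
instance
proof
  fix x y z :: "'a fw"
  show "x * y * z = x * (y * z)" by transfer (rule fa_mul_assoc_raw)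
  show "1 * x = x" by transfer (simp add: fa_mul_const_left)
  show "x * 1 = x" by transfer (simp add: fa_mul_const_right)
  show "(x + y) * z = x * z + y * z" by transfer (rule fa_mul_add_left)
  show "x * (y + z) = x * y + x * z" by transfer (rule fa_mul_add_right)
  show "x + y + z = x + (y + z)" by transfer (simp add: add.assoc)
  show "x + y = y + x" by transfer (simp add: add.commute)
  show "0 + x = x" by transfer simp
  show "- x + x = 0" by transfer simp
  show "x - y = x + - y" by transfer simp
  show "(0::'a fw) \<noteq> 1" by transfer (auto simp: fa_const_def fun_eq_iff)
qed
end

lift_definition sc :: "'a::field \<Rightarrow> 'a fw" is fa_const .
lift_definition gen :: "gen \<Rightarrow> 'a::field fw" is fa_gen .

lemma sc_mult_left: "sc s * x = Abs_fw (\<lambda>w. s * Rep_fw x w)"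
  by transfer (simp add: fa_mul_const_left)
lemma sc_comm: "sc s * x = x * sc s"
  by transfer (simp add: fa_mul_const_left fa_mul_const_right mult.commute)
lemma sc_mult: "sc s * sc t = sc (s * t)"
  by transfer (subst fa_mul_const_left, simp add: fa_const_def fun_eq_iff)
lemma sc_add: "sc s + sc t = sc (s + t)"
  by transfer (auto simp: fa_const_def)
lemma sc_diff: "sc s - sc t = sc (s - t)"
  by transfer (auto simp: fa_const_def)
lemma sc_one: "sc 1 = 1" by transfer simp
lemma sc_zero: "sc 0 = 0" by transfer (auto simp: fa_const_def)
lemma sc_neg: "- x = sc (-1) * x"
  by transfer (simp add: fa_mul_const_left)



definition VV :: "'a::field fw \<Rightarrow> bool" where "VV x \<longleftrightarrow> fa_valid (Rep_fw x)"

lemma supp_mul_sub: "{w. fa_mul p q w \<noteq> 0} \<subseteq> (\<lambda>(u,v). u @ v) ` ({u. p u \<noteq> 0} \<times> {v. q v \<noteq> 0})"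
proof
  fix w assume "w \<in> {w. fa_mul p q w \<noteq> 0}"
  then have "(\<Sum>k\<le>length w. p (take k w) * q (drop k w)) \<noteq> 0" by (simp add: fa_mul_def)
  then obtain k where "p (take k w) * q (drop k w) \<noteq> 0" by (meson sum.neutral)
  then have "p (take k w) \<noteq> 0" "q (drop k w) \<noteq> 0" by auto
  then show "w \<in> (\<lambda>(u,v). u @ v) ` ({u. p u \<noteq> 0} \<times> {v. q v \<noteq> 0})"
    by (intro image_eqI[where x="(take k w, drop k w)"]) auto
qed

lemma VV_mul: "VV x \<Longrightarrow> VV y \<Longrightarrow> VV (x * y)"
  unfolding VV_def fa_valid_def times_fw.rep_eq
  by (rule finite_subset[OF supp_mul_sub]) auto

lemma VV_add: "VV x \<Longrightarrow> VV y \<Longrightarrow> VV (x + y)"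
  unfolding VV_def fa_valid_def plus_fw.rep_eq
  by (rule finite_subset[of _ "{w. Rep_fw x w \<noteq> 0} \<union> {w. Rep_fw y w \<noteq> 0}"]) auto

lemma VV_uminus: "VV x \<Longrightarrow> VV (- x)"
  unfolding VV_def fa_valid_def uminus_fw.rep_eq by simp

lemma VV_diff: "VV x \<Longrightarrow> VV y \<Longrightarrow> VV (x - y)"
  using VV_add VV_uminus by (metis diff_conv_add_uminus)

lemma VV_sc: "VV (sc s)"
  unfolding VV_def fa_valid_def sc.rep_eq fa_const_def
  by (rule finite_subset[of _ "{[]}"]) auto

lemma VV_one: "VV 1" using VV_sc[of 1] by (simp add: sc_one)
lemma VV_zero: "VV 0" using VV_sc[of 0] by (simp add: sc_zero)

lemma VV_gen: "VV (gen g)"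
  unfolding VV_def fa_valid_def gen.rep_eq fa_gen_def
  by (rule finite_subset[of _ "{[g]}"]) auto

lemma VV_pow: "VV x \<Longrightarrow> VV (x ^ n)"
  by (induction n) (auto simp: VV_one VV_mul)

lemma VV_sum: "(\<And>i. i \<in> S \<Longrightarrow> VV (f i)) \<Longrightarrow> VV (sum f S)"
  by (induction S rule: infinite_finite_induct) (auto simp: VV_zero VV_add)

lemma Rep_sum: "Rep_fw (sum f S) w = (\<Sum>i\<in>S. Rep_fw (f i) w)"
  by (induction S rule: infinite_finite_induct) (auto simp: zero_fw.rep_eq plus_fw.rep_eq)

lemma Rep_pow: "Rep_fw (x ^ n) = fa_pow (Rep_fw x) n"
  by (induction n) (auto simp: one_fw.rep_eq times_fw.rep_eq)

lemma Rep_add: "Rep_fw (x + y) = fa_add (Rep_fw x) (Rep_fw y)"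
  by (simp add: plus_fw.rep_eq fa_add_def)
lemma Rep_diff: "Rep_fw (x - y) = fa_sub (Rep_fw x) (Rep_fw y)"
  by (simp add: minus_fw.rep_eq fa_sub_def)
lemma Rep_mul: "Rep_fw (x * y) = fa_mul (Rep_fw x) (Rep_fw y)"
  by (simp add: times_fw.rep_eq)
lemma Rep_smult: "Rep_fw (sc s * y) = fa_smult s (Rep_fw y)"
  by (simp add: times_fw.rep_eq sc.rep_eq fa_mul_const_left fa_smult_def)

definition RR :: "'a::field fw set" where "RR = {x. Rep_fw x \<in> racah_ideal}"
definition LL :: "'a::field \<Rightarrow> 'a \<Rightarrow> 'a \<Rightarrow> 'a \<Rightarrow> 'a fw set" where
  "LL a b c \<nu> = {x. Rep_fw x \<in> left_ideal (I_gens a b c \<nu>)}"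
definition JJ :: "'a::field \<Rightarrow> 'a \<Rightarrow> 'a \<Rightarrow> 'a \<Rightarrow> 'a fw set" where
  "JJ a b c \<nu> = {x. Rep_fw x \<in> I_pre a b c \<nu>}"

lemma RR_add: "x \<in> RR \<Longrightarrow> y \<in> RR \<Longrightarrow> x + y \<in> RR"
  unfolding RR_def racah_ideal_def by (simp add: Rep_add two_ideal.ti_add)
lemma RR_lmul: "x \<in> RR \<Longrightarrow> VV u \<Longrightarrow> u * x \<in> RR"
  unfolding RR_def racah_ideal_def VV_def by (simp add: Rep_mul two_ideal.ti_lmul)
lemma RR_rmul: "x \<in> RR \<Longrightarrow> VV u \<Longrightarrow> x * u \<in> RR"
  unfolding RR_def racah_ideal_def VV_def by (simp add: Rep_mul two_ideal.ti_rmul)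
lemma RR_gen: "Rep_fw x \<in> racah_rels \<Longrightarrow> x \<in> RR"
  unfolding RR_def racah_ideal_def by (simp add: two_ideal.ti_gen)

lemma LL_gen: "Rep_fw x \<in> I_gens a b c \<nu> \<Longrightarrow> x \<in> LL a b c \<nu>"
  unfolding LL_def by (simp add: left_ideal.li_gen)
lemma LL_lmul: "x \<in> LL a b c \<nu> \<Longrightarrow> VV u \<Longrightarrow> u * x \<in> LL a b c \<nu>"
  unfolding LL_def VV_def by (simp add: Rep_mul left_ideal.li_lmul)

lemma fa_add_zero: "fa_add p fa_zero = p" "fa_add fa_zero p = p"
  by (auto simp: fa_add_def fa_zero_def)

lemma RR_JJ: "x \<in> RR \<Longrightarrow> x \<in> JJ a b c \<nu>"
  unfolding RR_def JJ_def I_pre_def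
  by simp (metis fa_add_zero(1) left_ideal.li_zero)
lemma LL_JJ: "x \<in> LL a b c \<nu> \<Longrightarrow> x \<in> JJ a b c \<nu>"
  unfolding LL_def JJ_def I_pre_def racah_ideal_def
  by simp (metis fa_add_zero(2) two_ideal.ti_zero)

lemma JJ_add: assumes "x \<in> JJ a b c \<nu>" "y \<in> JJ a b c \<nu>" shows "x + y \<in> JJ a b c \<nu>"
proof -
  obtain j1 l1 where 1: "Rep_fw x = fa_add j1 l1" "j1 \<in> racah_ideal" "l1 \<in> left_ideal (I_gens a b c \<nu>)"
    using assms(1) unfolding JJ_def I_pre_def by auto
  obtain j2 l2 where 2: "Rep_fw y = fa_add j2 l2" "j2 \<in> racah_ideal" "l2 \<in> left_ideal (I_gens a b c \<nu>)"
    using assms(2) unfolding JJ_def I_pre_def by auto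
  have "Rep_fw (x + y) = fa_add (fa_add j1 j2) (fa_add l1 l2)"
    by (simp add: Rep_add 1 2 fa_add_def fun_eq_iff algebra_simps)
  then show ?thesis unfolding JJ_def I_pre_def racah_ideal_def
    using 1 2 by (auto simp: racah_ideal_def intro: two_ideal.ti_add left_ideal.li_add)
qed

lemma JJ_lmul: assumes "x \<in> JJ a b c \<nu>" "VV u" shows "u * x \<in> JJ a b c \<nu>"
proof -
  obtain j1 l1 where 1: "Rep_fw x = fa_add j1 l1" "j1 \<in> racah_ideal" "l1 \<in> left_ideal (I_gens a b c \<nu>)"
    using assms(1) unfolding JJ_def I_pre_def by auto
  have "Rep_fw (u * x) = fa_add (fa_mul (Rep_fw u) j1) (fa_mul (Rep_fw u) l1)"
    by (simp add: Rep_mul 1 fa_add_def fa_mul_add_right)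
  then show ?thesis unfolding JJ_def I_pre_def racah_ideal_def
    using 1 assms(2) by (auto simp: racah_ideal_def VV_def intro: two_ideal.ti_lmul left_ideal.li_lmul)
qed

lemma JJ_neg: "x \<in> JJ a b c \<nu> \<Longrightarrow> - x \<in> JJ a b c \<nu>"
  by (subst sc_neg) (simp add: JJ_lmul VV_sc)
lemma JJ_diff: "x \<in> JJ a b c \<nu> \<Longrightarrow> y \<in> JJ a b c \<nu> \<Longrightarrow> x - y \<in> JJ a b c \<nu>"
  by (metis JJ_add JJ_neg diff_conv_add_uminus)
lemma JJ_zero: "0 \<in> JJ a b c \<nu>"
proof -
  have "Rep_fw (0::'a fw) = fa_zero" by (simp add: zero_fw.rep_eq fa_zero_def)
  then have "(0::'a fw) \<in> LL a b c \<nu>" unfolding LL_def by (simp add: left_ideal.li_zero)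
  then show ?thesis by (rule LL_JJ)
qed



abbreviation "eA \<equiv> gen GA"
abbreviation "eB \<equiv> gen GB"
abbreviation "eC \<equiv> gen GC"
abbreviation "eD \<equiv> gen GD"

definition ealpha :: "'a::field fw" where "ealpha = (eA*eD - eD*eA) + (eA*eC - eB*eA)"
definition edelta :: "'a::field fw" where "edelta = eA + (eB + eC)"
definition er1 :: "'a::field fw" where "er1 = (eA*eB - eB*eA) - sc 2 * eD"
definition er3 :: "'a::field fw" where "er3 = (eC*eA - eA*eC) - sc 2 * eD"

lemma Rep_ealpha: "Rep_fw ealpha = r_alpha"
  by (simp add: ealpha_def r_alpha_def fa_comm_def Rep_add Rep_diff Rep_mul gen.rep_eq)
lemma Rep_edelta: "Rep_fw edelta = r_delta"
  by (simp add: edelta_def r_delta_def Rep_add gen.rep_eq)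

lemma er1_RR: "er1 \<in> RR"
  by (rule RR_gen) (simp only: er1_def Rep_diff Rep_smult, simp add: racah_rels_def fa_comm_def Rep_smult Rep_diff Rep_mul gen.rep_eq)
lemma er3_RR: "er3 \<in> RR"
  by (rule RR_gen) (simp only: er3_def Rep_diff Rep_smult, simp add: racah_rels_def fa_comm_def Rep_smult Rep_diff Rep_mul gen.rep_eq)
lemma alpha_RR: "ealpha * eA - eA * ealpha \<in> RR"
  by (rule RR_gen) (auto simp: racah_rels_def fa_comm_def Rep_diff Rep_mul gen.rep_eq Rep_ealpha)

lemma RR_neg: "x \<in> RR \<Longrightarrow> - x \<in> RR"
  by (subst sc_neg) (simp add: RR_lmul VV_sc)
lemma RR_diff: "x \<in> RR \<Longrightarrow> y \<in> RR \<Longrightarrow> x - y \<in> RR"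
  by (metis RR_add RR_neg diff_conv_add_uminus)

lemma sc_left_comm: "x * (sc s * y) = sc s * (x * y)"
  by (metis mult.assoc sc_comm)

lemma delta_RR: "edelta * eA - eA * edelta \<in> RR"
proof -
  have "edelta * eA - eA * edelta = er3 - er1"
    by (simp add: edelta_def er1_def er3_def algebra_simps)
  then show ?thesis using er1_RR er3_RR RR_diff by metis
qed

lemma comm_pow_RR: assumes "z * eA - eA * z \<in> RR" "VV z" shows "z * eA ^ n - eA ^ n * z \<in> RR"
proof (induction n)
  case 0 then show ?case using RR_diff[OF assms(1) assms(1)] by simp
next
  case (Suc n)
  have "z * eA ^ Suc n - eA ^ Suc n * z = (z * eA - eA * z) * eA ^ n + eA * (z * eA ^ n - eA ^ n * z)"
    by (simp add: algebra_simps)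
  then show ?case using Suc assms by (metis RR_add RR_lmul RR_rmul VV_gen VV_pow)
qed

lemma VV_ealpha: "VV ealpha" unfolding ealpha_def by (intro VV_add VV_diff VV_mul VV_gen)
lemma VV_edelta: "VV edelta" unfolding edelta_def by (intro VV_add VV_diff VV_mul VV_gen)
lemma VV_er1: "VV er1" unfolding er1_def by (intro VV_add VV_diff VV_mul VV_gen VV_sc)

context
  fixes a b c \<nu> :: "'a::field"
begin

lemma gen0: "eB - sc (thetas b \<nu> 0) \<in> JJ a b c \<nu>"
  by (rule LL_JJ, rule LL_gen) (simp add: I_gens_def Rep_diff gen.rep_eq sc.rep_eq)
lemma gen1: "(eB - sc (thetas b \<nu> 1)) * (eA - sc (theta a \<nu> 0)) - sc (phi a b c \<nu> 1) \<in> JJ a b c \<nu>"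
  by (rule LL_JJ, rule LL_gen) (simp add: I_gens_def Rep_diff Rep_mul gen.rep_eq sc.rep_eq)
lemma gen_alpha: "u * (ealpha - sc (zeta a b c \<nu>)) \<in> JJ a b c \<nu>" if "VV u"
  by (rule LL_JJ, rule LL_lmul[OF _ that], rule LL_gen) (simp add: I_gens_def Rep_diff sc.rep_eq Rep_ealpha)
lemma gen_delta: "u * (edelta - sc (eta a b c \<nu>)) \<in> JJ a b c \<nu>" if "VV u"
  by (rule LL_JJ, rule LL_lmul[OF _ that], rule LL_gen) (simp add: I_gens_def Rep_diff sc.rep_eq Rep_edelta)

lemma alpha_pow: "ealpha * eA ^ n - sc (zeta a b c \<nu>) * eA ^ n \<in> JJ a b c \<nu>"
proof -
  have "ealpha * eA ^ n - sc (zeta a b c \<nu>) * eA ^ n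
     = (ealpha * eA ^ n - eA ^ n * ealpha) + eA ^ n * (ealpha - sc (zeta a b c \<nu>))"
    by (simp add: algebra_simps sc_comm)
  then show ?thesis
    by (metis JJ_add RR_JJ comm_pow_RR[OF alpha_RR VV_ealpha] gen_alpha VV_pow VV_gen)
qed

lemma delta_pow: "edelta * eA ^ n - sc (eta a b c \<nu>) * eA ^ n \<in> JJ a b c \<nu>"
proof -
  have "edelta * eA ^ n - sc (eta a b c \<nu>) * eA ^ n
     = (edelta * eA ^ n - eA ^ n * edelta) + eA ^ n * (edelta - sc (eta a b c \<nu>))"
    by (simp add: algebra_simps sc_comm)
  then show ?thesis
    by (metis JJ_add RR_JJ comm_pow_RR[OF delta_RR VV_edelta] gen_delta VV_pow VV_gen)
qed

end



inductive_set Sp :: "'a::field fw set" where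
  Sp_zero: "0 \<in> Sp"
| Sp_step: "y \<in> Sp \<Longrightarrow> sc c * eA ^ i + y \<in> Sp"

lemma Sp_add: "x \<in> Sp \<Longrightarrow> y \<in> Sp \<Longrightarrow> x + y \<in> Sp"
  by (induction x rule: Sp.induct) (auto simp: add.assoc intro: Sp_step)

lemma Sp_smult: "x \<in> Sp \<Longrightarrow> sc s * x \<in> Sp"
proof (induction x rule: Sp.induct)
  case Sp_zero then show ?case by (simp add: Sp.Sp_zero)
next
  case (Sp_step y c i)
  have "sc s * (sc c * eA ^ i + y) = sc (s * c) * eA ^ i + sc s * y"
    by (simp add: distrib_left mult.assoc[symmetric] sc_mult)
  then show ?case using Sp_step by (simp add: Sp.Sp_step)
qed

lemma Sp_neg: "x \<in> Sp \<Longrightarrow> - x \<in> Sp"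
  by (subst sc_neg) (rule Sp_smult)
lemma Sp_diff: "x \<in> Sp \<Longrightarrow> y \<in> Sp \<Longrightarrow> x - y \<in> Sp"
  by (metis Sp_add Sp_neg diff_conv_add_uminus)

lemma Sp_A: "x \<in> Sp \<Longrightarrow> eA * x \<in> Sp"
proof (induction x rule: Sp.induct)
  case Sp_zero then show ?case by (simp add: Sp.Sp_zero)
next
  case (Sp_step y c i)
  have "eA * (sc c * eA ^ i + y) = sc c * eA ^ Suc i + eA * y"
    by (simp add: distrib_left sc_left_comm)
  then show ?case using Sp.Sp_step[OF Sp_step.IH, of c "Suc i"] by simp
qed

lemma Sp_pow: "eA ^ i \<in> Sp"
  using Sp_step[OF Sp_zero, of 1 i] by (simp add: sc_one)
lemma Sp_sc: "sc s \<in> Sp"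
  using Sp_step[OF Sp_zero, of s 0] by simp

lemma Sp_VV: "x \<in> Sp \<Longrightarrow> VV x"
  by (induction x rule: Sp.induct) (auto intro: VV_add VV_mul VV_sc VV_pow VV_gen VV_zero)

lemma Sp_form: "x \<in> Sp \<Longrightarrow> \<exists>n coef. x = (\<Sum>i<n. sc (coef i) * eA ^ i)"
proof (induction x rule: Sp.induct)
  case Sp_zero then show ?case by (auto intro!: exI[of _ 0])
next
  case (Sp_step y c j)
  then obtain n cf where y: "y = (\<Sum>i<n. sc (cf i) * eA ^ i)" by auto
  define N where "N = max n (Suc j)"
  define cf' where "cf' = (\<lambda>k. (if k < n then cf k else 0) + (if k = j then c else 0))"
  have "(\<Sum>i<N. sc (cf' i) * eA ^ i)
     = (\<Sum>i<N. sc (if i < n then cf i else 0) * eA ^ i) + (\<Sum>i<N. sc (if i = j then c else 0) * eA ^ i)"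
    by (simp add: cf'_def sc_add[symmetric] distrib_right sum.distrib)
  also have "(\<Sum>i<N. sc (if i < n then cf i else 0) * eA ^ i) = (\<Sum>i<n. sc (cf i) * eA ^ i)"
  proof -
    have "(\<Sum>i<N. sc (if i < n then cf i else 0) * eA ^ i) = (\<Sum>i<n. sc (if i < n then cf i else 0) * eA ^ i)"
      by (rule sum.mono_neutral_right) (auto simp: N_def sc_zero)
    then show ?thesis by simp
  qed
  also have "(\<Sum>i<N. sc (if i = j then c else 0) * eA ^ i) = (\<Sum>i<N. if i = j then sc c * eA ^ j else 0)"
    by (rule sum.cong) (auto simp: sc_zero)
  also have "\<dots> = sc c * eA ^ j" by (simp add: N_def less_max_iff_disj)
  finally show ?case using y by (auto simp: add.commute intro!: exI[of _ N] exI[of _ cf'])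
qed

definition Good :: "'a::field \<Rightarrow> 'a \<Rightarrow> 'a \<Rightarrow> 'a \<Rightarrow> 'a fw set" where
  "Good a b c \<nu> = {x. \<exists>y\<in>Sp. x - y \<in> JJ a b c \<nu>}"

context
  fixes a b c \<nu> :: "'a::field"
begin

lemma Good_Sp: "y \<in> Sp \<Longrightarrow> y \<in> Good a b c \<nu>"
  unfolding Good_def using JJ_zero by force

lemma Good_J: "x' \<in> Good a b c \<nu> \<Longrightarrow> x - x' \<in> JJ a b c \<nu> \<Longrightarrow> x \<in> Good a b c \<nu>"
  unfolding Good_def
proof clarify
  fix y assume "y \<in> Sp" "x' - y \<in> JJ a b c \<nu>" "x - x' \<in> JJ a b c \<nu>"
  have e: "x - y = (x - x') + (x' - y)" by simp
  have "(x - x') + (x' - y) \<in> JJ a b c \<nu>" by (rule JJ_add) fact+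
  with e show "\<exists>y\<in>Sp. x - y \<in> JJ a b c \<nu>" using \<open>y \<in> Sp\<close> by metis
qed

lemma Good_add: "x1 \<in> Good a b c \<nu> \<Longrightarrow> x2 \<in> Good a b c \<nu> \<Longrightarrow> x1 + x2 \<in> Good a b c \<nu>"
  unfolding Good_def
proof clarify
  fix y1 y2 assume h: "y1 \<in> Sp" "x1 - y1 \<in> JJ a b c \<nu>" "y2 \<in> Sp" "x2 - y2 \<in> JJ a b c \<nu>"
  have "x1 + x2 - (y1 + y2) = (x1 - y1) + (x2 - y2)" by (simp add: algebra_simps)
  then show "\<exists>y\<in>Sp. x1 + x2 - y \<in> JJ a b c \<nu>" using h by (metis JJ_add Sp_add)
qed

lemma Good_lmul: assumes "x \<in> Good a b c \<nu>" "VV u" "\<And>y. y \<in> Sp \<Longrightarrow> u * y \<in> Good a b c \<nu>"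
  shows "u * x \<in> Good a b c \<nu>"
proof -
  obtain y where y: "y \<in> Sp" "x - y \<in> JJ a b c \<nu>" using assms(1) unfolding Good_def by auto
  have "u * x - u * y = u * (x - y)" by (simp add: algebra_simps)
  then have "u * x - u * y \<in> JJ a b c \<nu>" using JJ_lmul[OF y(2) assms(2)] by simp
  then show ?thesis using Good_J assms(3)[OF y(1)] by blast
qed

lemma Good_smult: "x \<in> Good a b c \<nu> \<Longrightarrow> sc s * x \<in> Good a b c \<nu>"
  by (rule Good_lmul) (auto intro: VV_sc Good_Sp Sp_smult)
lemma Good_A: "x \<in> Good a b c \<nu> \<Longrightarrow> eA * x \<in> Good a b c \<nu>"
  by (rule Good_lmul) (auto intro: VV_gen Good_Sp Sp_A)
lemma Good_neg: "x \<in> Good a b c \<nu> \<Longrightarrow> - x \<in> Good a b c \<nu>"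
  by (subst sc_neg) (rule Good_smult)
lemma Good_diff: "x \<in> Good a b c \<nu> \<Longrightarrow> y \<in> Good a b c \<nu> \<Longrightarrow> x - y \<in> Good a b c \<nu>"
  by (metis Good_add Good_neg diff_conv_add_uminus)
lemma Good_zero: "0 \<in> Good a b c \<nu>" by (rule Good_Sp, rule Sp_zero)
lemma Good_JJ: "x \<in> JJ a b c \<nu> \<Longrightarrow> x \<in> Good a b c \<nu>"
  by (rule Good_J[OF Good_zero]) simp

lemma Good_lin: assumes "\<And>i. G * eA ^ i \<in> Good a b c \<nu>" shows "y \<in> Sp \<Longrightarrow> G * y \<in> Good a b c \<nu>"
proof (induction y rule: Sp.induct)
  case Sp_zero then show ?case by (simp add: Good_zero)
next
  case (Sp_step y c i)
  have "G * (sc c * eA ^ i + y) = sc c * (G * eA ^ i) + G * y" by (simp add: distrib_left sc_left_comm)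
  then show ?case using Sp_step assms by (simp add: Good_add Good_smult)
qed

end



lemma core:
  "(eB * eA * eA :: 'a::field fw) = (eA*(eB*eA) + eA*(eB*eA)) - eA*(eA*eB) + (ealpha + ealpha) - (eA*edelta + eA*edelta)
     + (eA*eA + eA*eA) + (eA*eB + eA*eB) + (eB*eA + eB*eA) + (eA*er1 - er1*eA)"
proof -
  have "sc 2 * eD = eD + (eD::'a fw)" by (metis one_add_one sc_add sc_one distrib_right mult_1)
  then show ?thesis
  unfolding ealpha_def edelta_def er1_def
  by (simp add: algebra_simps)
qed

context
  fixes a b c \<nu> :: "'a::field"
begin

lemma BA0: "eB * eA ^ 0 \<in> Good a b c \<nu>"
  using Good_J[OF Good_Sp[OF Sp_sc[of "thetas b \<nu> 0"]] gen0] by simp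

lemma BA1: "eB * eA ^ 1 \<in> Good a b c \<nu>"
proof -
  define t0 where "t0 = theta a \<nu> 0"
  define t1 where "t1 = thetas b \<nu> 1"
  define t0s where "t0s = thetas b \<nu> 0"
  define ph where "ph = phi a b c \<nu> 1"
  define Y where "Y = sc t1 * eA ^ 1 + (sc (ph + t0 * t0s - t1 * t0) * eA ^ 0 + 0)"
  have Y: "Y \<in> Sp" unfolding Y_def by (intro Sp_step Sp_zero)
  have Yeq: "Y = sc t1 * eA + (sc ph + sc (t0 * t0s) - sc (t1 * t0))"
    by (simp add: Y_def sc_add sc_diff)
  have e1: "eB * sc t0 = sc t0 * eB" by (rule sc_comm[symmetric])
  have e2: "sc t1 * sc t0 = sc (t1 * t0)" "sc t0 * sc t0s = sc (t0 * t0s)" by (simp_all add: sc_mult)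
  have e4: "(eB - sc t1) * (eA - sc t0) = eB * eA - eB * sc t0 - sc t1 * eA + sc t1 * sc t0"
    by (simp add: algebra_simps)
  have "eB * eA - Y = ((eB - sc t1) * (eA - sc t0) - sc ph) + sc t0 * (eB - sc t0s)"
    unfolding Yeq e4 by (simp add: e1 e2 algebra_simps)
  moreover have "((eB - sc t1) * (eA - sc t0) - sc ph) + sc t0 * (eB - sc t0s) \<in> JJ a b c \<nu>"
    unfolding t0_def t1_def t0s_def ph_def by (intro JJ_add gen1 JJ_lmul gen0 VV_sc)
  ultimately show ?thesis using Good_J[OF Good_Sp[OF Y]] by simp
qed

lemma alpha_Good: "ealpha * eA ^ n \<in> Good a b c \<nu>"
  using Good_J[OF Good_Sp[OF Sp_smult[OF Sp_pow]] alpha_pow] by blast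
lemma delta_Good: "edelta * eA ^ n \<in> Good a b c \<nu>"
  using Good_J[OF Good_Sp[OF Sp_smult[OF Sp_pow]] delta_pow] by blast

lemma BA_pair: "eB * eA ^ n \<in> Good a b c \<nu> \<and> eB * eA ^ Suc n \<in> Good a b c \<nu>"
proof (induction n)
  case 0 then show ?case using BA0 BA1 by simp
next
  case (Suc n)
  have F0: "eB * eA ^ n \<in> Good a b c \<nu>" using Suc by simp
  have F1: "eB * (eA * eA ^ n) \<in> Good a b c \<nu>" using Suc by simp
  have R1: "er1 * eA ^ n \<in> RR" "er1 * (eA * eA ^ n) \<in> RR"
    by (intro RR_rmul er1_RR VV_pow VV_gen VV_mul)+
  have "eB * eA ^ Suc (Suc n) = (eB * eA * eA) * eA ^ n" by (simp add: mult.assoc)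
  also have "\<dots> = (eA*(eB*(eA*eA ^ n)) + eA*(eB*(eA*eA ^ n))) - eA*(eA*(eB*eA ^ n))
     + (ealpha*eA ^ n + ealpha*eA ^ n) - (eA*(edelta*eA ^ n) + eA*(edelta*eA ^ n))
     + (eA*(eA*eA ^ n) + eA*(eA*eA ^ n)) + (eA*(eB*eA ^ n) + eA*(eB*eA ^ n))
     + (eB*(eA*eA ^ n) + eB*(eA*eA ^ n)) + (eA*(er1*eA ^ n) - er1*(eA*eA ^ n))"
    by (subst core) (simp only: distrib_right left_diff_distrib mult.assoc)
  finally have eq: "eB * eA ^ Suc (Suc n) = \<dots>" .
  have G: "eA*(eB*(eA*eA ^ n)) \<in> Good a b c \<nu>" "eA*(eA*(eB*eA ^ n)) \<in> Good a b c \<nu>"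
    "ealpha*eA ^ n \<in> Good a b c \<nu>" "eA*(edelta*eA ^ n) \<in> Good a b c \<nu>"
    "eA*(eA*eA ^ n) \<in> Good a b c \<nu>" "eA*(eB*eA ^ n) \<in> Good a b c \<nu>"
    "eB*(eA*eA ^ n) \<in> Good a b c \<nu>" "eA*(er1*eA ^ n) \<in> Good a b c \<nu>"
    "er1*(eA*eA ^ n) \<in> Good a b c \<nu>"
    using Good_A[OF F1] Good_A[OF Good_A[OF F0]] alpha_Good Good_A[OF delta_Good]
      Good_Sp[OF Sp_pow[of "Suc (Suc n)"]] Good_A[OF F0] F1
      Good_JJ[OF RR_JJ[OF RR_lmul[OF R1(1) VV_gen]]] Good_JJ[OF RR_JJ[OF R1(2)]]
    by simp_all
  have "eB * eA ^ Suc (Suc n) \<in> Good a b c \<nu>"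
    unfolding eq by (intro Good_add Good_diff G)
  then show ?case using F1 by simp
qed

lemma BA: "eB * eA ^ n \<in> Good a b c \<nu>" using BA_pair by blast

end



context
  fixes a b c \<nu> :: "'a::field"
  assumes two: "(2::'a) \<noteq> 0"
begin

lemma gen_Sp: "y \<in> Sp \<Longrightarrow> gen g * y \<in> Good a b c \<nu>"
proof -
  assume y: "y \<in> Sp"
  have B: "eB * y \<in> Good a b c \<nu>" by (rule Good_lin[OF BA y])
  have Ay: "eA * y \<in> Sp" by (rule Sp_A[OF y])
  have dl: "edelta * y \<in> Good a b c \<nu>" by (rule Good_lin[OF delta_Good y])
  show ?thesis
  proof (cases g)
    case GA then show ?thesis using Good_Sp[OF Ay] by simp
  next
    case GB then show ?thesis using B by simp
  next
    case GC
    have "eC * y = edelta * y - eA * y - eB * y" by (simp add: edelta_def algebra_simps)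
    then show ?thesis using GC dl Good_Sp[OF Ay] B by (simp add: Good_diff)
  next
    case GD
    have h: "sc (1/2) * sc 2 = (1 :: 'a fw)" using two by (simp add: sc_mult sc_one)
    have "eD = sc (1/2) * (sc 2 * (eD :: 'a fw))" by (simp add: mult.assoc[symmetric] h)
    also have "sc 2 * eD = eA * eB - eB * eA - (er1 :: 'a fw)" by (simp add: er1_def)
    finally have "eD * y = sc (1/2) * ((eA * eB - eB * eA - er1) * y)"
      by (simp add: mult.assoc)
    then have "eD * y = sc (1/2) * (eA * (eB * y) - eB * (eA * y) - er1 * y)"
      by (simp add: left_diff_distrib mult.assoc)
    moreover have "er1 * y \<in> Good a b c \<nu>"
      by (intro Good_JJ RR_JJ RR_rmul er1_RR Sp_VV y)
    ultimately show ?thesis using GD Good_A[OF B] Good_lin[OF BA Ay]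
      by (simp add: Good_diff Good_smult)
  qed
qed

lemma gen_Good: "x \<in> Good a b c \<nu> \<Longrightarrow> gen g * x \<in> Good a b c \<nu>"
  by (rule Good_lmul) (auto intro: VV_gen gen_Sp)

definition wd :: "gen list \<Rightarrow> 'a fw" where "wd w = Abs_fw (\<lambda>v. if v = w then 1 else 0)"

lemma fa_gen_delta: "fa_mul (fa_gen g) (\<lambda>v. if v = w then 1 else 0) = (\<lambda>v. if v = g # w then (1::'a) else 0)"
proof (rule ext)
  fix v :: "gen list"
  have "fa_mul (fa_gen g) (\<lambda>v. if v = w then 1 else 0) v
      = (\<Sum>k\<le>length v. if k = 1 then (if v = g # w then (1::'a) else 0) else 0)"
    unfolding fa_mul_def fa_gen_def
  proof (rule sum.cong)
    fix k assume k: "k \<in> {..length v}"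
    show "(if take k v = [g] then 1 else 0) * (if drop k v = w then 1 else 0)
        = (if k = 1 then (if v = g # w then (1::'a) else 0) else 0)"
    proof (cases "take k v = [g]")
      case True
      then have "length (take k v) = 1" by simp
      then have "k = 1" using k by auto
      then show ?thesis using True by (cases v) auto
    next
      case False
      then show ?thesis by (cases v) auto
    qed
  qed simp
  also have "\<dots> = (if v = g # w then 1 else 0)" by auto
  finally show "fa_mul (fa_gen g) (\<lambda>v. if v = w then 1 else 0) v = (if v = g # w then (1::'a) else 0)" .
qed

lemma wd_Cons: "wd (g # w) = gen g * wd w"
  unfolding wd_def by (simp add: times_fw.abs_eq gen.abs_eq fa_gen_delta Abs_fw_inverse)

lemma wd_Nil: "wd [] = 1"
  unfolding wd_def by (simp add: one_fw_def fa_const_def)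

lemma wd_Good: "wd w \<in> Good a b c \<nu>"
  by (induction w) (auto simp: wd_Nil wd_Cons intro: gen_Good Good_Sp Sp_sc[of 1, simplified sc_one])

lemma Good_sum: "finite S \<Longrightarrow> (\<And>i. i \<in> S \<Longrightarrow> f i \<in> Good a b c \<nu>) \<Longrightarrow> sum f S \<in> Good a b c \<nu>"
  by (induction S rule: finite_induct) (auto intro: Good_add Good_zero)

lemma valid_Good: assumes "fa_valid x" shows "Abs_fw x \<in> Good a b c \<nu>"
proof -
  define S where "S = {w. x w \<noteq> 0}"
  have fin: "finite S" using assms by (simp add: fa_valid_def S_def)
  have "Rep_fw (\<Sum>w\<in>S. sc (x w) * wd w) = x"
  proof (rule ext)
    fix v
    have "Rep_fw (\<Sum>w\<in>S. sc (x w) * wd w) v = (\<Sum>w\<in>S. if v = w then x w else 0)"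
      by (simp add: Rep_sum Rep_smult wd_def Abs_fw_inverse fa_smult_def if_distrib cong: if_cong)
    also have "\<dots> = x v" using fin by (simp add: S_def)
    finally show "Rep_fw (\<Sum>w\<in>S. sc (x w) * wd w) v = x v" .
  qed
  then have "Abs_fw x = (\<Sum>w\<in>S. sc (x w) * wd w)" by (metis Rep_fw_inverse)
  then show ?thesis using fin by (simp add: Good_sum Good_smult wd_Good)
qed

end


theorem lemma3p5:
  fixes a b c \<nu> :: "'a::field"
  assumes alg_closed: "\<And>p :: 'a poly. degree p \<ge> 1 \<Longrightarrow> \<exists>x. poly p x = 0"
    and char_ne_2: "(2::'a) \<noteq> 0"
    and x_valid: "fa_valid (x :: 'a fa)"
  shows "\<exists>(n::nat) (coef::nat \<Rightarrow> 'a).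
           fa_sub x (\<lambda>w. \<Sum>i<n. fa_smult (coef i) (fa_pow fA i) w) \<in> I_pre a b c \<nu>"
proof -
  have "Abs_fw x \<in> Good a b c \<nu>" by (rule valid_Good[OF char_ne_2 x_valid])
  then obtain y where y: "y \<in> Sp" "Abs_fw x - y \<in> JJ a b c \<nu>" unfolding Good_def by auto
  obtain n coef where yf: "y = (\<Sum>i<n. sc (coef i) * eA ^ i)" using Sp_form[OF y(1)] by auto
  have ry: "Rep_fw y = (\<lambda>w. \<Sum>i<n. fa_smult (coef i) (fa_pow fA i) w)"
    by (rule ext) (simp add: yf Rep_sum Rep_smult Rep_pow gen.rep_eq)
  have "Rep_fw (Abs_fw x - y) = fa_sub x (\<lambda>w. \<Sum>i<n. fa_smult (coef i) (fa_pow fA i) w)"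
    by (simp add: Rep_diff Abs_fw_inverse ry)
  then show ?thesis using y(2) unfolding JJ_def by auto
qed

end
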